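(* Let $h>0$, $k\in\mathbb{N}$, $\beta>0$, $f(x)=hx^k$ and $\mathcal{B}(\alpha)=f(\alpha)+\sqrt2\beta\sqrt{1-\alpha^2}$. If $\beta<\beta_c(k,h)$, then every global maximizer $\hat\alpha$ of $\mathcal{B}$ on $(-1,1)$ satisfies $\mathcal{B}''(\hat\alpha)<0$.
   Context: $\beta_c(1,h)=\infty$, $\beta_c(2,h)=\sqrt2h$, and for $k\ge3$, $\beta_c(k,h)=\frac{h}{\sqrt2}\frac{k-1}{k-2}\left(1-\frac{1}{(k-1)^2}\right)^{k/2}$. *)

theory Defs
  imports "HOL-Analysis.Analysis"
begin

text \<open>Critical inverse temperature beta_c(k,h), with value infinity for k = 1.
  Only meaningful for k \<ge> 1; the value at k = 0 is an arbitrary placeholder.\<close>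
definition beta_c :: "nat \<Rightarrow> real \<Rightarrow> ereal" where
  "beta_c k h =
     (if k = 1 then \<infinity>
      else if k = 2 then ereal (sqrt 2 * h)
      else ereal (h / sqrt 2 * ((real k - 1) / (real k - 2)) *
                  (1 - 1 / (real k - 1)^2) powr (real k / 2)))"

definition fB :: "real \<Rightarrow> nat \<Rightarrow> real \<Rightarrow> real \<Rightarrow> real" where
  "fB h k \<beta> \<alpha> = h * \<alpha> ^ k + sqrt 2 * \<beta> * sqrt (1 - \<alpha>^2)"

end

theory Submission
  imports Defs
begin

definition F1 :: "real \<Rightarrow> nat \<Rightarrow> real \<Rightarrow> real \<Rightarrow> real" where
  "F1 h k \<beta> a = h * (real k * a^(k-1)) - sqrt 2 * \<beta> * a / sqrt (1 - a^2)"
definition F2 :: "real \<Rightarrow> nat \<Rightarrow> real \<Rightarrow> real \<Rightarrow> real" where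
  "F2 h k \<beta> a = h * (real k * (real (k-1) * a^(k-1-1))) - sqrt 2 * \<beta> / sqrt (1 - a^2)^3"

lemma d1: assumes "a \<in> {-1<..<1}" shows "(fB h k \<beta> has_real_derivative F1 h k \<beta> a) (at a)"
proof -
  have p: "1 - a^2 > 0" using assms by (simp add: abs_square_less_1 abs_less_iff)
  show ?thesis unfolding fB_def[abs_def]
    apply (insert p)
    apply (rule derivative_eq_intros refl | simp)+
    using p by (simp add: F1_def field_simps)
qed

lemma d2: assumes "a \<in> {-1<..<1}" shows "(deriv (fB h k \<beta>) has_real_derivative F2 h k \<beta> a) (at a)"
proof -
  have p: "1 - a^2 > 0" using assms by (simp add: abs_square_less_1 abs_less_iff)
  have s2: "sqrt (1 - a^2)^2 = 1 - a^2" using p by simp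
  have sp: "sqrt (1 - a^2) > 0" using p by simp
  have e: "(sqrt (1 - a\<^sup>2) + a * (inverse (sqrt (1 - a\<^sup>2)) * a)) / (1 - a\<^sup>2) = 1 / sqrt (1 - a^2)^3"
    using sp s2 p by (simp add: field_simps power3_eq_cube power2_eq_square) 
  have D: "((\<lambda>a. F1 h k \<beta> a) has_real_derivative F2 h k \<beta> a) (at a)" unfolding F1_def
    apply (insert p)
    apply (rule derivative_eq_intros refl | simp)+
    using e p
  proof -
    assume e: "(sqrt (1 - a\<^sup>2) + a * (inverse (sqrt (1 - a\<^sup>2)) * a)) / (1 - a\<^sup>2) = 1 / sqrt (1 - a^2)^3" 
    have "(sqrt 2 * \<beta> * sqrt (1 - a\<^sup>2) + sqrt 2 * \<beta> * a * (inverse (sqrt (1 - a\<^sup>2)) * a)) / (1 - a\<^sup>2)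
      = sqrt 2 * \<beta> * ((sqrt (1 - a\<^sup>2) + a * (inverse (sqrt (1 - a\<^sup>2)) * a)) / (1 - a\<^sup>2))"
      by (simp add: algebra_simps add_divide_distrib)
    then show "real (k - Suc 0) * a ^ (k - Suc (Suc 0)) * real k * h -
    (sqrt 2 * \<beta> * sqrt (1 - a\<^sup>2) + sqrt 2 * \<beta> * a * (inverse (sqrt (1 - a\<^sup>2)) * a)) / (1 - a\<^sup>2) =
    F2 h k \<beta> a" using e unfolding F2_def by simp
  qed
  show ?thesis
    apply (rule has_field_derivative_transform_within_open[OF D, of "{-1<..<1}"])
    using assms by (auto intro!: DERIV_imp_deriv[symmetric] d1)
qed

lemma dd: assumes "a \<in> {-1<..<1}" shows "deriv (deriv (fB h k \<beta>)) a = F2 h k \<beta> a"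
  using d2[OF assms] by (rule DERIV_imp_deriv)

theorem lemma7p1:
  fixes h \<beta> :: real and k :: nat
  assumes "h > 0" and "k \<ge> 1" and "\<beta> > 0"
    and "ereal \<beta> < beta_c k h"
  shows "\<forall>\<alpha>\<in>{-1<..<1}. (\<forall>x\<in>{-1<..<1}. fB h k \<beta> x \<le> fB h k \<beta> \<alpha>)
           \<longrightarrow> deriv (deriv (fB h k \<beta>)) \<alpha> < 0"
proof (intro ballI impI)
  fix a :: real
  assume aI: "a \<in> {-1<..<1}" and mx: "\<forall>x\<in>{-1<..<1}. fB h k \<beta> x \<le> fB h k \<beta> a"
  define c where "c = sqrt 2 * \<beta>"
  define s where "s = sqrt (1 - a^2)"
  have c0: "c > 0" using assms by (simp add: c_def)
  have p: "1 - a^2 > 0" using aI by (simp add: abs_square_less_1 abs_less_iff)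
  have s2: "s^2 = 1 - a^2" using p by (simp add: s_def)
  have sp: "s > 0" using p by (simp add: s_def)
  have F2e: "F2 h k \<beta> a = h * (real k * (real (k-1) * a^(k-1-1))) - c / s^3"
    by (simp add: F2_def c_def s_def)
  have F1z: "F1 h k \<beta> a = 0"
  proof (rule DERIV_local_max[OF d1[OF aI]])
    show "0 < min (1 - a) (1 + a)" using aI by simp
    show "\<forall>y. \<bar>a - y\<bar> < min (1 - a) (1 + a) \<longrightarrow> fB h k \<beta> y \<le> fB h k \<beta> a"
      using mx by (auto simp: abs_less_iff)
  qed
  have B0: "fB h k \<beta> 0 = c" using assms by (simp add: fB_def c_def)
  have Ba: "fB h k \<beta> a = h * a^k + c * s" by (simp add: fB_def c_def s_def)
  have ge: "c \<le> h * a^k + c * s" using mx B0 Ba by force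
  show "deriv (deriv (fB h k \<beta>)) a < 0"
    unfolding dd[OF aI] F2e
  proof (cases "k = 1")
    case True
    then show "h * (real k * (real (k-1) * a^(k-1-1))) - c / s^3 < 0" using c0 sp by simp
  next
    case k1: False
    show "h * (real k * (real (k-1) * a^(k-1-1))) - c / s^3 < 0"
    proof (cases "a = 0")
      case True
      then have s1: "s = 1" by (simp add: s_def)
      show ?thesis
      proof (cases "k = 2")
        case True
        then have "\<beta> < sqrt 2 * h" using assms(4) by (simp add: beta_c_def)
        then have "sqrt 2 * \<beta> < sqrt 2 * (sqrt 2 * h)" by (intro mult_strict_left_mono) auto
        then have "c < 2 * h" unfolding c_def by (simp add: mult.assoc[symmetric])
        define t where "t = c / (2 * h)"
        have t0: "t > 0" "t < 1" using c0 \<open>c < 2 * h\<close> assms(1) by (auto simp: t_def)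
        define a0 where "a0 = sqrt (1 - t^2)"
        have a0s: "a0^2 = 1 - t^2" using t0 by (simp add: a0_def power_le_one)
        have "a0 \<in> {-1<..<1}" using t0 a0s unfolding a0_def
          by (auto simp: power_less_one_iff abs_square_less_1 intro: less_le_trans[OF _ real_sqrt_ge_zero])
        then have "fB h k \<beta> a0 \<le> c" using mx B0 \<open>a = 0\<close> by auto
        moreover have "fB h k \<beta> a0 = h * (1 - t^2) + c * t"
          using True a0s t0 by (simp add: fB_def c_def)
        ultimately have "h * (1 - t^2) + c * t \<le> c" by simp
        then have "h * (2*h - c)^2 \<le> 0" using assms(1) unfolding t_def
          by (simp add: field_simps power2_eq_square)
        then have "(2*h - c)^2 \<le> 0" using assms(1) by (simp add: mult_le_0_iff)
        moreover have "(2*h - c)^2 > 0" using \<open>c < 2 * h\<close> by simp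
        ultimately show ?thesis by simp
      next
        case False
        then have "k - 1 - 1 > 0" using k1 assms(2) by simp
        then have z: "(0::real) ^ (k - Suc (Suc 0)) = 0" by simp
        show ?thesis using \<open>a = 0\<close> s1 c0 by (simp add: z)
      qed
    next
      case an: False
      have "s^2 < 1" using s2 an by simp
      then have sl: "s < 1" using sp by (simp add: power_less_one_iff abs_square_less_1)
      have kk: "k - 1 = Suc (k - 1 - 1)" using k1 assms(2) by simp
      have pw: "a^(k-1) = a * a^(k-1-1)" by (subst kk) simp
      have pk: "a^k = a^2 * a^(k-1-1)"
      proof -
        have "k = Suc (Suc (k-1-1))" using kk assms(2) by simp
        then have "a^k = a^(Suc (Suc (k-1-1)))" by simp
        also have "\<dots> = a^2 * a^(k-1-1)" by (simp add: power2_eq_square)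
        finally show ?thesis .
      qed
      define P where "P = h * real k * a^(k-1-1)"
      have "h * (real k * (a * a^(k-1-1))) = c * a / s" using F1z pw
        by (simp add: F1_def c_def s_def)
      then have "a * P = a * (c / s)" unfolding P_def by (simp add: field_simps)
      then have Pe: "P = c / s" using an by (metis mult_left_cancel)
      have kr: "real (k-1) = real k - 1" using assms(2) by simp
      have F2P: "h * (real k * (real (k-1) * a^(k-1-1))) - c / s^3 = P * ((real k - 1) - 1 / s^2)"
      proof -
        have t1: "h * (real k * (real (k-1) * a^(k-1-1))) = (real k - 1) * P" unfolding kr P_def by simp
        have cP: "c = P * s" using Pe sp by simp
        show ?thesis unfolding t1 cP using sp by (simp add: field_simps power2_eq_square power3_eq_cube)
      qed
      show ?thesis
      proof (rule ccontr)
        assume "\<not> ?thesis"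
        then have "P * ((real k - 1) - 1 / s^2) \<ge> 0" using F2P by simp
        moreover have "P > 0" using Pe c0 sp by simp
        ultimately have "(real k - 1) - 1 / s^2 \<ge> 0" by (simp add: zero_le_mult_iff)
        then have q: "(real k - 1) * s^2 \<ge> 1" using sp by (simp add: field_simps)
        have "(real k - 1) * s > (real k - 1) * s^2"
          using sl sp k1 assms(2) by (simp add: power2_eq_square)
        then have q2: "1 - (real k - 1) * s < 0" using q by simp
        have "h * a^k = P / real k * (1 - s^2)" using pk s2 assms(2) by (simp add: P_def)
        then have "h * a^k + c * s - c = c * (1 - s) * (1 - (real k - 1) * s) / (s * real k)"
          using sp assms(2) unfolding Pe s2[symmetric]
          by (simp add: field_simps power2_eq_square)
        moreover have "c * (1 - s) * (1 - (real k - 1) * s) / (s * real k) < 0"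
          using c0 sl q2 sp assms(2)
          by (intro divide_neg_pos mult_pos_neg) auto
        ultimately show False using ge by simp
      qed
    qed
  qed
qed
end
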